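(* In the setting of the directed balloon graph with parameters $(d,b)$ (with $d\ge2$, $b\ge1$, edge weight $\gamma>0$, loop weight $-\nu<0$, driver node $v_0$, target node $v_d$), the Gramian entry satisfies $$\lim_{t\to\infty}W_{v_d,v_d}(t)=\frac{b^2}{2\nu}\left(\frac{\gamma}{2\nu}\right)^{2d}\frac{(2d)!}{(d!)^2},$$ and hence, for fixed $\beta$, $$\frac{\beta^2}{2}\lim_{t\to\infty}\frac{1}{W_{v_d,v_d}(t)}=\frac{\beta^2}{2}\,\frac{2\nu}{b^2}\left(\frac{2\nu}{\gamma}\right)^{2d}\frac{(d!)^2}{(2d)!}.$$
   Context: Directed balloon graph with parameters $(d,b)$: two end nodes $v_0$ and $v_d$ and $b$ pairwise internally disjoint directed paths from $v_0$ to $v_d$, each of length $d$. Weighted adjacency matrix $A$: $A_{j,k}=\gamma$ if there is an edge from node $k$ to node $j$, $A_{j,j}=-\nu$ for every node, other entries $0$. $B=\mathbf{e}_{v_0}$. $W(t)$ is the solution of $\dot W=AW+WA^T+BB^T$, $W(0)=0$. $\beta\in\mathbb{R}$ is a fixed scalar (the output displacement $y_f-\mathbf{e}_{v_d}^Te^{At_f}\mathbf{x}_0$). *)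

theory Defs
  imports "HOL-Analysis.Analysis"
begin

text \<open>Nodes of the directed balloon graph with parameters (d,b):
  Src is v_0, Tgt is v_d, and Mid i k (i < b, 1 \<le> k \<le> d-1) is the k-th
  internal node of the i-th path.\<close>

datatype node = Src | Tgt | Mid nat nat

definition balloon_nodes :: "nat \<Rightarrow> nat \<Rightarrow> node set" where
  "balloon_nodes d b = {Src, Tgt} \<union> {Mid i k | i k. i < b \<and> 1 \<le> k \<and> k \<le> d - 1}"

text \<open>Directed edges: the i-th path is
  Src \<rightarrow> Mid i 1 \<rightarrow> ... \<rightarrow> Mid i (d-1) \<rightarrow> Tgt (length d).\<close>

definition pos :: "nat \<Rightarrow> node \<Rightarrow> nat" where
  "pos d v = (case v of Src \<Rightarrow> 0 | Tgt \<Rightarrow> d | Mid i k \<Rightarrow> k)"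

definition path_of :: "node \<Rightarrow> nat \<Rightarrow> bool" where
  "path_of v i = (case v of Src \<Rightarrow> True | Tgt \<Rightarrow> True | Mid i' k \<Rightarrow> i' = i)"

definition balloon_edge :: "nat \<Rightarrow> nat \<Rightarrow> node \<Rightarrow> node \<Rightarrow> bool" where
  "balloon_edge d b u v \<longleftrightarrow> u \<in> balloon_nodes d b \<and> v \<in> balloon_nodes d b \<and>
     (\<exists>i<b. path_of u i \<and> path_of v i \<and> pos d v = pos d u + 1)"

definition balloon_A :: "nat \<Rightarrow> nat \<Rightarrow> real \<Rightarrow> real \<Rightarrow> node \<Rightarrow> node \<Rightarrow> real" where
  "balloon_A d b \<gamma> \<nu> j k =
     (if j = k then - \<nu> else if balloon_edge d b k j then \<gamma> else 0)"

definition driver_B :: "node \<Rightarrow> real" where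
  "driver_B j = (if j = Src then 1 else 0)"

definition is_gramian_solution ::
  "nat \<Rightarrow> nat \<Rightarrow> real \<Rightarrow> real \<Rightarrow> (real \<Rightarrow> node \<Rightarrow> node \<Rightarrow> real) \<Rightarrow> bool" where
  "is_gramian_solution d b \<gamma> \<nu> W \<longleftrightarrow>
     (\<forall>j\<in>balloon_nodes d b. \<forall>k\<in>balloon_nodes d b.
        W 0 j k = 0 \<and>
        (\<forall>t\<ge>0. ((\<lambda>s. W s j k) has_real_derivative
            ((\<Sum>l\<in>balloon_nodes d b. balloon_A d b \<gamma> \<nu> j l * W t l k)
             + (\<Sum>l\<in>balloon_nodes d b. W t j l * balloon_A d b \<gamma> \<nu> k l)
             + driver_B j * driver_B k)) (at t within {0..})))"

end

theory Submission imports Defs begin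

definition hh :: "real \<Rightarrow> real \<Rightarrow> nat \<Rightarrow> real \<Rightarrow> real" where
  "hh \<gamma> \<nu> p s = (\<gamma> * s) ^ p / fact p * exp (- \<nu> * s)"

lemma hh_deriv: "(hh \<gamma> \<nu> p has_real_derivative
   (-\<nu> * hh \<gamma> \<nu> p s + (if p = 0 then 0 else \<gamma> * hh \<gamma> \<nu> (p-1) s))) (at s)"
proof (cases p)
  case 0 then show ?thesis unfolding hh_def
    by (auto intro!: derivative_eq_intros)
next
  case (Suc q)
  show ?thesis unfolding hh_def Suc
    apply (rule derivative_eq_intros refl | simp)+
    apply (simp add: field_simps del: fact_Suc)
    done
qed

lemma at_within_Ici_eq:
  fixes t :: real assumes "t \<ge> 0"
  shows "at t within {0..} = at t within {0..t+1}"
  by (rule at_within_nhd[where S="{..<t+1}"]) auto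

lemma finite_nodes: "finite (balloon_nodes d b)"
proof -
  have "{Mid i k | i k. i < b \<and> 1 \<le> k \<and> k \<le> d - 1} \<subseteq> (\<lambda>(i,k). Mid i k) ` ({..<b} \<times> {..d})"
    by auto
  then show ?thesis unfolding balloon_nodes_def
    by (meson finite_Un finite_SigmaI finite_atMost finite_imageI finite_insert finite_lessThan finite_subset finite.emptyI)
qed

lemma edge_pos: "balloon_edge d b l v \<Longrightarrow> pos d v = pos d l + 1"
  unfolding balloon_edge_def by auto

lemma rowsum:
  assumes "v \<in> balloon_nodes d b"
  shows "(\<Sum>l\<in>balloon_nodes d b. balloon_A d b \<gamma> \<nu> v l * f l)
     = -\<nu> * f v + \<gamma> * (\<Sum>l\<in>{l\<in>balloon_nodes d b. balloon_edge d b l v}. f l)"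
proof -
  let ?N = "balloon_nodes d b"
  have "(\<Sum>l\<in>?N. balloon_A d b \<gamma> \<nu> v l * f l)
     = (\<Sum>l\<in>?N. (if v = l then -\<nu> * f l else 0) + (if balloon_edge d b l v then \<gamma> * f l else 0))"
    by (rule sum.cong) (auto simp: balloon_A_def dest: edge_pos)
  also have "\<dots> = -\<nu> * f v + (\<Sum>l\<in>{l\<in>?N. balloon_edge d b l v}. \<gamma> * f l)"
    using assms finite_nodes by (simp add: sum.distrib sum.inter_filter)
  finally show ?thesis by (simp add: sum_distrib_left)
qed

definition cc :: "nat \<Rightarrow> node \<Rightarrow> real" where
  "cc b v = (if v = Tgt then real b else 1)"

definition gg :: "nat \<Rightarrow> nat \<Rightarrow> real \<Rightarrow> real \<Rightarrow> node \<Rightarrow> real \<Rightarrow> real" where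
  "gg d b \<gamma> \<nu> v s = cc b v * hh \<gamma> \<nu> (pos d v) s"

lemma preds_Src: "{l\<in>balloon_nodes d b. balloon_edge d b l Src} = {}"
  by (auto dest: edge_pos simp: pos_def)

lemma preds_Mid:
  assumes "Mid i k \<in> balloon_nodes d b"
  shows "{l\<in>balloon_nodes d b. balloon_edge d b l (Mid i k)} = {if k = 1 then Src else Mid i (k-1)}"
proof -
  have ik: "i < b" "1 \<le> k" "k \<le> d - 1" using assms by (auto simp: balloon_nodes_def)
  show ?thesis
  proof (intro equalityI subsetI)
    fix l assume "l \<in> {l\<in>balloon_nodes d b. balloon_edge d b l (Mid i k)}"
    then show "l \<in> {if k = 1 then Src else Mid i (k-1)}"
      using ik by (cases l) (auto simp: balloon_edge_def pos_def path_of_def balloon_nodes_def)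
  next
    fix l assume "l \<in> {if k = 1 then Src else Mid i (k-1)}"
    then show "l \<in> {l\<in>balloon_nodes d b. balloon_edge d b l (Mid i k)}"
      using ik assms by (auto simp: balloon_edge_def pos_def path_of_def balloon_nodes_def)
  qed
qed

lemma preds_Tgt:
  assumes "d \<ge> 2"
  shows "{l\<in>balloon_nodes d b. balloon_edge d b l Tgt} = (\<lambda>i. Mid i (d-1)) ` {..<b}"
proof (intro equalityI subsetI)
  fix l assume "l \<in> {l\<in>balloon_nodes d b. balloon_edge d b l Tgt}"
  then show "l \<in> (\<lambda>i. Mid i (d-1)) ` {..<b}"
    using assms by (cases l) (auto simp: balloon_edge_def pos_def path_of_def balloon_nodes_def)
next
  fix l assume "l \<in> (\<lambda>i. Mid i (d-1)) ` {..<b}"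
  then show "l \<in> {l\<in>balloon_nodes d b. balloon_edge d b l Tgt}"
    using assms by (auto simp: balloon_edge_def pos_def path_of_def balloon_nodes_def)
qed

lemma pred_sum:
  assumes "d \<ge> 2" "v \<in> balloon_nodes d b"
  shows "\<gamma> * (\<Sum>l\<in>{l\<in>balloon_nodes d b. balloon_edge d b l v}. gg d b \<gamma> \<nu> l s)
     = cc b v * (if pos d v = 0 then 0 else \<gamma> * hh \<gamma> \<nu> (pos d v - 1) s)"
proof (cases v)
  case Src then show ?thesis by (simp add: preds_Src pos_def)
next
  case Tgt
  have "inj_on (\<lambda>i. Mid i (d-1)) {..<b}" by (auto simp: inj_on_def)
  then show ?thesis using assms Tgt
    by (simp add: preds_Tgt sum.reindex gg_def cc_def pos_def)
next
  case (Mid i k)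
  have "1 \<le> k" using assms Mid by (auto simp: balloon_nodes_def)
  then show ?thesis using assms Mid
    by (simp add: preds_Mid gg_def cc_def pos_def)
qed

lemma gg_deriv:
  assumes "d \<ge> 2" "v \<in> balloon_nodes d b"
  shows "(gg d b \<gamma> \<nu> v has_real_derivative
     (\<Sum>l\<in>balloon_nodes d b. balloon_A d b \<gamma> \<nu> v l * gg d b \<gamma> \<nu> l s)) (at s)"
proof -
  have "(gg d b \<gamma> \<nu> v has_real_derivative
     cc b v * (-\<nu> * hh \<gamma> \<nu> (pos d v) s + (if pos d v = 0 then 0 else \<gamma> * hh \<gamma> \<nu> (pos d v - 1) s))) (at s)"
    unfolding gg_def[abs_def] by (intro DERIV_cmult hh_deriv)
  also have "cc b v * (-\<nu> * hh \<gamma> \<nu> (pos d v) s + (if pos d v = 0 then 0 else \<gamma> * hh \<gamma> \<nu> (pos d v - 1) s))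
     = -\<nu> * gg d b \<gamma> \<nu> v s + \<gamma> * (\<Sum>l\<in>{l\<in>balloon_nodes d b. balloon_edge d b l v}. gg d b \<gamma> \<nu> l s)"
    using pred_sum[OF assms, of \<gamma> \<nu> s] by (simp add: gg_def algebra_simps)
  also have "\<dots> = (\<Sum>l\<in>balloon_nodes d b. balloon_A d b \<gamma> \<nu> v l * gg d b \<gamma> \<nu> l s)"
    using rowsum[OF assms(2)] by simp
  finally show ?thesis .
qed

lemma gg_0:
  assumes "d \<ge> 2" "v \<in> balloon_nodes d b"
  shows "gg d b \<gamma> \<nu> v 0 = driver_B v"
  using assms by (cases v) (auto simp: gg_def hh_def cc_def pos_def driver_B_def balloon_nodes_def)

definition uu :: "nat \<Rightarrow> nat \<Rightarrow> real \<Rightarrow> real \<Rightarrow> node \<Rightarrow> node \<Rightarrow> real \<Rightarrow> real" where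
  "uu d b \<gamma> \<nu> j k t = integral {0..t} (\<lambda>s. gg d b \<gamma> \<nu> j s * gg d b \<gamma> \<nu> k s)"

lemma uu_deriv:
  assumes "t \<ge> 0"
  shows "(uu d b \<gamma> \<nu> j k has_real_derivative gg d b \<gamma> \<nu> j t * gg d b \<gamma> \<nu> k t) (at t within {0..})"
proof -
  have c: "continuous_on {0..t+1} (\<lambda>s. gg d b \<gamma> \<nu> j s * gg d b \<gamma> \<nu> k s)"
    unfolding gg_def hh_def by (intro continuous_intros) auto
  have "(uu d b \<gamma> \<nu> j k has_real_derivative gg d b \<gamma> \<nu> j t * gg d b \<gamma> \<nu> k t) (at t within {0..t+1})"
    unfolding uu_def[abs_def] using assms by (intro integral_has_real_derivative[OF c]) auto
  then show ?thesis using at_within_Ici_eq[OF assms] by simp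
qed

lemma uu_0: "uu d b \<gamma> \<nu> j k 0 = 0"
  by (simp add: uu_def)

lemma lyap_uu:
  assumes "d \<ge> 2" "j \<in> balloon_nodes d b" "k \<in> balloon_nodes d b" "t \<ge> 0"
  shows "(\<Sum>l\<in>balloon_nodes d b. balloon_A d b \<gamma> \<nu> j l * uu d b \<gamma> \<nu> l k t)
       + (\<Sum>l\<in>balloon_nodes d b. uu d b \<gamma> \<nu> j l t * balloon_A d b \<gamma> \<nu> k l)
       + driver_B j * driver_B k = gg d b \<gamma> \<nu> j t * gg d b \<gamma> \<nu> k t"
proof -
  let ?N = "balloon_nodes d b" and ?A = "balloon_A d b \<gamma> \<nu>" and ?g = "gg d b \<gamma> \<nu>" and ?u = "uu d b \<gamma> \<nu>"
  define R where "R t = (\<Sum>l\<in>?N. ?A j l * ?u l k t) + (\<Sum>l\<in>?N. ?u j l t * ?A k l)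
       + driver_B j * driver_B k - ?g j t * ?g k t" for t
  have "\<forall>x\<in>{0..}. (R has_real_derivative 0) (at x within {0..})"
  proof
    fix x :: real assume x: "x \<in> {0..}"
    have d1: "((\<lambda>t. \<Sum>l\<in>?N. ?A j l * ?u l k t) has_real_derivative (\<Sum>l\<in>?N. ?A j l * (?g l x * ?g k x))) (at x within {0..})"
      using x by (intro DERIV_sum) (rule DERIV_cmult, rule uu_deriv, simp)
    have d2: "((\<lambda>t. \<Sum>l\<in>?N. ?u j l t * ?A k l) has_real_derivative (\<Sum>l\<in>?N. (?g j x * ?g l x) * ?A k l)) (at x within {0..})"
      using x by (intro DERIV_sum) (rule DERIV_cmult_right, rule uu_deriv, simp)
    have d3: "((\<lambda>t. ?g j t * ?g k t) has_real_derivative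
       (\<Sum>l\<in>?N. ?A j l * ?g l x) * ?g k x + (\<Sum>l\<in>?N. ?A k l * ?g l x) * ?g j x) (at x within {0..})"
      by (rule DERIV_mult; rule has_field_derivative_at_within; rule gg_deriv; fact)
    have "(R has_real_derivative (\<Sum>l\<in>?N. ?A j l * (?g l x * ?g k x)) + (\<Sum>l\<in>?N. (?g j x * ?g l x) * ?A k l) + 0
        - ((\<Sum>l\<in>?N. ?A j l * ?g l x) * ?g k x + (\<Sum>l\<in>?N. ?A k l * ?g l x) * ?g j x)) (at x within {0..})"
      unfolding R_def[abs_def] by (rule DERIV_diff[OF DERIV_add[OF DERIV_add[OF d1 d2] DERIV_const] d3])
    moreover have "(\<Sum>l\<in>?N. ?A j l * (?g l x * ?g k x)) + (\<Sum>l\<in>?N. (?g j x * ?g l x) * ?A k l) + 0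
        - ((\<Sum>l\<in>?N. ?A j l * ?g l x) * ?g k x + (\<Sum>l\<in>?N. ?A k l * ?g l x) * ?g j x) = 0"
    proof -
      have e1: "(\<Sum>l\<in>?N. ?A j l * (?g l x * ?g k x)) = (\<Sum>l\<in>?N. ?A j l * ?g l x) * ?g k x"
        by (simp add: sum_distrib_right mult.assoc)
      have e2: "(\<Sum>l\<in>?N. (?g j x * ?g l x) * ?A k l) = (\<Sum>l\<in>?N. ?A k l * ?g l x) * ?g j x"
        by (subst sum_distrib_right) (rule sum.cong, simp_all)
      show ?thesis by (simp only: e1 e2)
    qed
    ultimately show "(R has_real_derivative 0) (at x within {0..})" by simp
  qed
  then obtain c where c: "\<forall>x\<in>{0..}. R x = c"
    using has_field_derivative_zero_constant[of "{0..}" R] by auto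
  have "R 0 = 0" unfolding R_def using assms by (simp add: uu_0 gg_0)
  then have "R t = 0" using c assms by auto
  then show ?thesis unfolding R_def by simp
qed

lemma W_eq_uu_aux:
  assumes d2: "d \<ge> 2" and sol: "is_gramian_solution d b \<gamma> \<nu> W"
  shows "\<forall>j k. j \<in> balloon_nodes d b \<longrightarrow> k \<in> balloon_nodes d b \<longrightarrow> pos d j + pos d k = n
           \<longrightarrow> (\<forall>t\<ge>0. W t j k = uu d b \<gamma> \<nu> j k t)"
proof (induction n rule: less_induct)
  case (less n)
  let ?N = "balloon_nodes d b" and ?A = "balloon_A d b \<gamma> \<nu>" and ?g = "gg d b \<gamma> \<nu>" and ?u = "uu d b \<gamma> \<nu>"
  show ?case
  proof (intro allI impI)
    fix j k t :: "_" assume j: "j \<in> ?N" and k: "k \<in> ?N" and hn: "pos d j + pos d k = n" and t: "(0::real) \<le> t"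
    have IH1: "W x l k = ?u l k x" if "l \<in> ?N" "balloon_edge d b l j" "x \<ge> 0" for l x
      using less[of "pos d l + pos d k"] that k hn edge_pos[OF that(2)] by auto
    have IH2: "W x j l = ?u j l x" if "l \<in> ?N" "balloon_edge d b l k" "x \<ge> 0" for l x
      using less[of "pos d j + pos d l"] that j hn edge_pos[OF that(2)] by auto
    define D where "D s = W s j k - ?u j k s" for s
    have dD: "(D has_real_derivative (-2 * \<nu> * D x)) (at x within {0..})" if x: "x \<ge> 0" for x
    proof -
      have dW: "((\<lambda>s. W s j k) has_real_derivative
            ((\<Sum>l\<in>?N. ?A j l * W x l k) + (\<Sum>l\<in>?N. W x j l * ?A k l)
             + driver_B j * driver_B k)) (at x within {0..})"
        using sol j k x unfolding is_gramian_solution_def by blast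
      have du: "(?u j k has_real_derivative
            ((\<Sum>l\<in>?N. ?A j l * ?u l k x) + (\<Sum>l\<in>?N. ?u j l x * ?A k l)
             + driver_B j * driver_B k)) (at x within {0..})"
        using uu_deriv[OF x, of d b \<gamma> \<nu> j k] lyap_uu[OF d2 j k x, of \<gamma> \<nu>] by simp
      have "(D has_real_derivative
            ((\<Sum>l\<in>?N. ?A j l * W x l k) + (\<Sum>l\<in>?N. W x j l * ?A k l)
             + driver_B j * driver_B k) - ((\<Sum>l\<in>?N. ?A j l * ?u l k x) + (\<Sum>l\<in>?N. ?u j l x * ?A k l)
             + driver_B j * driver_B k)) (at x within {0..})"
        unfolding D_def[abs_def] by (rule DERIV_diff[OF dW du])
      moreover have "((\<Sum>l\<in>?N. ?A j l * W x l k) + (\<Sum>l\<in>?N. W x j l * ?A k l)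
             + driver_B j * driver_B k) - ((\<Sum>l\<in>?N. ?A j l * ?u l k x) + (\<Sum>l\<in>?N. ?u j l x * ?A k l)
             + driver_B j * driver_B k)
          = (\<Sum>l\<in>?N. ?A j l * (W x l k - ?u l k x)) + (\<Sum>l\<in>?N. ?A k l * (W x j l - ?u j l x))"
        by (simp add: sum_subtractf algebra_simps)
      moreover have "(\<Sum>l\<in>?N. ?A j l * (W x l k - ?u l k x)) = -\<nu> * D x"
      proof -
        have "(\<Sum>l\<in>{l\<in>?N. balloon_edge d b l j}. W x l k - ?u l k x) = 0"
          using IH1 x by (intro sum.neutral) auto
        then show ?thesis using rowsum[OF j, of \<gamma> \<nu> "\<lambda>l. W x l k - ?u l k x"] by (simp add: D_def)
      qed
      moreover have "(\<Sum>l\<in>?N. ?A k l * (W x j l - ?u j l x)) = -\<nu> * D x"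
      proof -
        have "(\<Sum>l\<in>{l\<in>?N. balloon_edge d b l k}. W x j l - ?u j l x) = 0"
          using IH2 x by (intro sum.neutral) auto
        then show ?thesis using rowsum[OF k, of \<gamma> \<nu> "\<lambda>l. W x j l - ?u j l x"] by (simp add: D_def)
      qed
      ultimately show ?thesis by (simp add: mult.assoc)
    qed
    define E where "E s = exp (2 * \<nu> * s) * D s" for s
    have "\<forall>x\<in>{0..}. (E has_real_derivative 0) (at x within {0..})"
    proof
      fix x :: real assume "x \<in> {0..}"
      then have "(E has_real_derivative (exp (2 * \<nu> * x) * (2 * \<nu>)) * D x + (-2 * \<nu> * D x) * exp (2 * \<nu> * x)) (at x within {0..})"
        unfolding E_def[abs_def]
        by (intro DERIV_mult dD) (auto intro!: derivative_eq_intros)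
      then show "(E has_real_derivative 0) (at x within {0..})" by (simp add: algebra_simps)
    qed
    then obtain c where c: "\<forall>x\<in>{0..}. E x = c"
      using has_field_derivative_zero_constant[of "{0..}" E] by auto
    have "E 0 = 0" using sol j k unfolding E_def D_def is_gramian_solution_def by (simp add: uu_0)
    then have "E t = 0" using c t by auto
    then show "W t j k = ?u j k t" unfolding E_def D_def by simp
  qed
qed

lemma W_eq_uu:
  assumes "d \<ge> 2" "is_gramian_solution d b \<gamma> \<nu> W" "j \<in> balloon_nodes d b" "k \<in> balloon_nodes d b" "t \<ge> 0"
  shows "W t j k = uu d b \<gamma> \<nu> j k t"
  using W_eq_uu_aux[OF assms(1,2), of "pos d j + pos d k"] assms(3-5) by blast

definition HH :: "nat \<Rightarrow> real \<Rightarrow> real" where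
  "HH k x = - (\<Sum>n\<le>k. (x^n * exp (-x)) / fact n)"

lemma HH_deriv: "(HH k has_real_derivative (x^k * exp (-x) / fact k)) (at x)"
proof (induction k)
  case 0 show ?case unfolding HH_def by (auto intro!: derivative_eq_intros)
next
  case (Suc k)
  have "((\<lambda>x. HH k x - (x^Suc k * exp (-x)) / fact (Suc k)) has_real_derivative
    x^k * exp (-x) / fact k - ((real (Suc k) - x) * x ^ k * exp (- x)) / (fact (Suc k))) (at x)"
    by (intro DERIV_diff Suc)
       (auto intro!: derivative_eq_intros
             simp del: fact_Suc power_Suc simp add: field_simps power_Suc[symmetric])
  also have "(\<lambda>x. HH k x - (x^Suc k * exp (-x)) / fact (Suc k)) = HH (Suc k)"
    by (simp add: HH_def fun_eq_iff)
  also have "x^k * exp (-x) / fact k - ((real (Suc k) - x) * x ^ k * exp (- x)) / (fact (Suc k))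
      = x^Suc k * exp (-x) / fact (Suc k)"
    by (auto simp: field_simps simp del: fact_Suc) (simp_all add: of_nat_Suc field_simps)
  finally show ?case .
qed

lemma HH_0: "HH k 0 = -1"
  by (simp add: HH_def power_0_left if_distrib[where f="\<lambda>x. x / a" for a] sum.If_cases)

lemma HH_lim: assumes "a > 0" shows "((\<lambda>t. HH k (a * t)) \<longlongrightarrow> 0) at_top"
proof -
  have lim: "LIM t at_top. a * t :> at_top"
    by (rule filterlim_tendsto_pos_mult_at_top[OF tendsto_const assms filterlim_ident])
  have "((\<lambda>t. - (\<Sum>n\<le>k. ((a*t)^n / exp (a*t)) / fact n)) \<longlongrightarrow> - (\<Sum>n\<le>k. 0 / fact n)) at_top"
    by (intro tendsto_intros filterlim_compose[OF tendsto_power_div_exp_0 lim]) simp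
  then show ?thesis by (simp add: HH_def exp_minus field_simps)
qed

lemma power_exp_integral:
  assumes "a > 0" "t \<ge> 0"
  shows "((\<lambda>s. s^n * exp (- a * s)) has_integral
     (fact n / a^(n+1) * HH n (a*t) + fact n / a^(n+1))) {0..t}"
proof -
  define F where "F x = fact n / a^(n+1) * HH n (a*x)" for x
  have "((\<lambda>s. s^n * exp (- a * s)) has_integral (F t - F 0)) {0..t}"
  proof (rule fundamental_theorem_of_calculus[OF assms(2)])
    fix x assume "x \<in> {0..t}"
    have "(F has_real_derivative fact n / a^(n+1) * ((a*x)^n * exp (-(a*x)) / fact n * a)) (at x)"
      unfolding F_def[abs_def]
      by (intro DERIV_cmult DERIV_chain2[OF HH_deriv]) (auto intro!: derivative_eq_intros)
    moreover have "fact n / a^(n+1) * ((a*x)^n * exp (-(a*x)) / fact n * a) = x^n * exp (- a * x)"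
      using assms by (simp add: power_mult_distrib field_simps)
    ultimately show "(F has_vector_derivative x^n * exp (- a * x)) (at x within {0..t})"
      by (simp add: has_real_derivative_iff_has_vector_derivative[symmetric] has_field_derivative_at_within)
  qed
  then show ?thesis by (simp add: F_def HH_0)
qed

theorem mainTheorem2:
  fixes d b :: nat and \<gamma> \<nu> \<beta> :: real
    and W :: "real \<Rightarrow> node \<Rightarrow> node \<Rightarrow> real"
  assumes "d \<ge> 2" and "b \<ge> 1" and "\<gamma> > 0" and "\<nu> > 0"
    and "is_gramian_solution d b \<gamma> \<nu> W"
  shows "((\<lambda>t. W t Tgt Tgt) \<longlongrightarrow>
            (real b)^2 / (2 * \<nu>) * (\<gamma> / (2 * \<nu>))^(2*d) * fact (2*d) / (fact d)^2) at_top
       \<and> ((\<lambda>t. \<beta>^2 / 2 * (1 / W t Tgt Tgt)) \<longlongrightarrow>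
            \<beta>^2 / 2 * (2 * \<nu> / (real b)^2) * (2 * \<nu> / \<gamma>)^(2*d) * (fact d)^2 / fact (2*d)) at_top"
proof -
  define K where "K = (real b)^2 * \<gamma>^(2*d) / (fact d)^2"
  define n where "n = 2 * d"
  define a where "a = 2 * \<nu>"
  have a: "a > 0" using assms by (simp add: a_def)
  have T: "Tgt \<in> balloon_nodes d b" by (simp add: balloon_nodes_def)
  have integrand: "gg d b \<gamma> \<nu> Tgt s * gg d b \<gamma> \<nu> Tgt s = K * (s^n * exp (- a * s))" for s
  proof -
    have e: "exp (- \<nu> * s) * exp (- \<nu> * s) = exp (- a * s)"
      by (simp add: a_def exp_add[symmetric])
    have p: "(\<gamma> * s)^d * (\<gamma> * s)^d = \<gamma>^(2*d) * s^n"
      by (simp add: n_def power_mult_distrib mult_2 power_add)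
    have "gg d b \<gamma> \<nu> Tgt s * gg d b \<gamma> \<nu> Tgt s
        = (real b)^2 / (fact d)^2 * ((\<gamma> * s)^d * (\<gamma> * s)^d) * (exp (- \<nu> * s) * exp (- \<nu> * s))"
      by (simp add: gg_def cc_def hh_def pos_def power2_eq_square)
    also have "\<dots> = K * (s^n * exp (- a * s))"
      by (simp only: e p K_def) simp
    finally show ?thesis .
  qed
  have Weq: "W t Tgt Tgt = K * (fact n / a^(n+1) * HH n (a*t) + fact n / a^(n+1))" if t: "t \<ge> 0" for t
  proof -
    have "W t Tgt Tgt = uu d b \<gamma> \<nu> Tgt Tgt t"
      using W_eq_uu[OF assms(1,5) T T t] .
    also have "\<dots> = integral {0..t} (\<lambda>s. K * (s^n * exp (- a * s)))"
      by (simp add: uu_def integrand)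
    also have "\<dots> = K * (fact n / a^(n+1) * HH n (a*t) + fact n / a^(n+1))"
      by (rule integral_unique, rule has_integral_mult_right, rule power_exp_integral[OF a t])
    finally show ?thesis .
  qed
  have ev: "eventually (\<lambda>t. K * (fact n / a^(n+1) * HH n (a*t) + fact n / a^(n+1)) = W t Tgt Tgt) at_top"
    using eventually_ge_at_top[of "0::real"] by (rule eventually_mono) (simp add: Weq)
  have lim0: "((\<lambda>t. K * (fact n / a^(n+1) * HH n (a*t) + fact n / a^(n+1))) \<longlongrightarrow>
      K * (fact n / a^(n+1) * 0 + fact n / a^(n+1))) at_top"
    by (intro tendsto_intros HH_lim a)
  have L: "K * (fact n / a^(n+1) * 0 + fact n / a^(n+1))
     = (real b)^2 / (2 * \<nu>) * (\<gamma> / (2 * \<nu>))^(2*d) * fact (2*d) / (fact d)^2"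
    using assms by (simp add: K_def n_def a_def power_divide field_simps)
  have lim1: "((\<lambda>t. W t Tgt Tgt) \<longlongrightarrow>
            (real b)^2 / (2 * \<nu>) * (\<gamma> / (2 * \<nu>))^(2*d) * fact (2*d) / (fact d)^2) at_top"
    using tendsto_cong[OF ev] lim0 L by simp
  have Lpos: "(real b)^2 / (2 * \<nu>) * (\<gamma> / (2 * \<nu>))^(2*d) * fact (2*d) / (fact d)^2 \<noteq> 0"
    using assms by simp
  have "((\<lambda>t. \<beta>^2 / 2 * (1 / W t Tgt Tgt)) \<longlongrightarrow>
      \<beta>^2 / 2 * (1 / ((real b)^2 / (2 * \<nu>) * (\<gamma> / (2 * \<nu>))^(2*d) * fact (2*d) / (fact d)^2))) at_top"
    by (intro tendsto_intros lim1 Lpos)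
  moreover have "\<beta>^2 / 2 * (1 / ((real b)^2 / (2 * \<nu>) * (\<gamma> / (2 * \<nu>))^(2*d) * fact (2*d) / (fact d)^2))
     = \<beta>^2 / 2 * (2 * \<nu> / (real b)^2) * (2 * \<nu> / \<gamma>)^(2*d) * (fact d)^2 / fact (2*d)"
    using assms by (simp add: power_divide field_simps)
  ultimately show ?thesis using lim1 by simp
qed

end
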